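(* For every $\zeta=(\zeta^\alpha_i)\in\mathcal A^{\mathsf A}_{\mathsf I}$ there exists a unique family $(\phi_k)_{k\in\mathsf I}$, $\phi_k=(\phi^\alpha_k)\in\mathcal A^{\mathsf A}$, such that $$\zeta=\sum_{k\in\mathsf I}\varepsilon^k_{\phi_k}$$ (the sum is finite in each component, since $(\varepsilon^k_\phi)^\alpha_i=0$ unless $k\le i$), and it is given by $$\phi^\alpha_k=\sum_{i,j\in\mathsf I,\ i+j=k}(-1)^{|j|}\binom{k}{i}D_j\zeta^\alpha_i .$$ Thus $\mathcal A^{\mathsf A}_{\mathsf I}$ is $\mathsf I$-graded by the subspaces $\Phi^k$, $k\in\mathsf I$.
   Context: $\mathbb F\in\{\mathbb R,\mathbb C\}$, $m\in\mathbb N$, $\mathsf A$ a finite index set, $\mathsf I=\mathbb Z_+^m$, $|j|=j^1+\dots+j^m$, $k\le i$ componentwise, $\binom{k}{i}=\prod_\mu\binom{k^\mu}{i^\mu}$. Variables $x^\mu$ ($\mu=1,\dots,m$) on $\mathbb R^m$ and $u^\alpha_i$ ($\alpha\in\mathsf A$, $i\in\mathsf I$); $\mathcal A$ is the algebra of smooth $\mathbb F$-valued functions each depending on finitely many of these variables; $D_\mu=\partial_{x^\mu}+\sum_{\alpha,i}u^\alpha_{i+(\mu)}\partial_{u^\alpha_i}$ where $(\mu)$ is the multi-index with $1$ in position $\mu$; $D_j=D_1^{j^1}\cdots D_m^{j^m}$. $\mathcal A^{\mathsf A}$ is the space of tuples $(\phi^\alpha)_{\alpha\in\mathsf A}$ in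 $\mathcal A$, $\mathcal A^{\mathsf A}_{\mathsf I}$ the space of all families $(\zeta^\alpha_i)_{\alpha\in\mathsf A,i\in\mathsf I}$ in $\mathcal A$. For $k\in\mathsf I$, $\phi\in\mathcal A^{\mathsf A}$: $(\varepsilon^k_\phi)^\alpha_i=\binom{i}{k}D_{i-k}\phi^\alpha$ if $k\le i$ and $0$ otherwise, and $\Phi^k=\{\varepsilon^k_\phi\mid\phi\in\mathcal A^{\mathsf A}\}$. *)

theory Defs
  imports "HOL-Analysis.Analysis"
begin

text \<open>Multi-indices: I = Z_+^m is modelled as functions 'm => nat, where the finite,
linearly ordered type 'm plays the role of {1..m}. The finite index set A is a
finite type 'a. Variables of the jet space: x^mu (mu in 'm) and u^alpha_i.\<close>

datatype ('m, 'a) jvar = X 'm | U 'a "'m \<Rightarrow> nat"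

type_synonym ('m, 'a) jpoint = "('m, 'a) jvar \<Rightarrow> real"

definition pd :: "('m, 'a) jvar \<Rightarrow> (('m, 'a) jpoint \<Rightarrow> 'f::real_normed_field)
                   \<Rightarrow> ('m, 'a) jpoint \<Rightarrow> 'f" where
  "pd v f p = vector_derivative (\<lambda>t::real. f (p(v := p v + t))) (at 0)"

fun iter_pd :: "('m, 'a) jvar list \<Rightarrow> (('m, 'a) jpoint \<Rightarrow> 'f::real_normed_field)
                   \<Rightarrow> ('m, 'a) jpoint \<Rightarrow> 'f" where
  "iter_pd [] f = f"
| "iter_pd (v # vs) f = pd v (iter_pd vs f)"

definition smoothA :: "(('m, 'a) jpoint \<Rightarrow> 'f::real_normed_field) set" where
  "smoothA = {f. (\<exists>S. finite S \<and> (\<forall>p q. (\<forall>v\<in>S. p v = q v) \<longrightarrow> f p = f q))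
      \<and> (\<forall>vs. continuous_on UNIV (iter_pd vs f))
      \<and> (\<forall>vs v p. (\<lambda>t::real. iter_pd vs f (p(v := p v + t))) differentiable (at 0))}"

definition unitidx :: "'m \<Rightarrow> 'm \<Rightarrow> nat" where
  "unitidx mu = (\<lambda>nu. if nu = mu then 1 else 0)"

text \<open>Total derivative D_mu (the sum is finite for f in \<A>).\<close>
definition Dtot :: "'m \<Rightarrow> (('m, 'a) jpoint \<Rightarrow> 'f::real_normed_field)
                   \<Rightarrow> ('m, 'a) jpoint \<Rightarrow> 'f" where
  "Dtot mu f = (\<lambda>p. pd (X mu) f p +
      (\<Sum>(a, i) \<in> {(a, i). pd (U a i) f \<noteq> (\<lambda>_. 0)}.
          of_real (p (U a (\<lambda>nu. i nu + unitidx mu nu))) * pd (U a i) f p))"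

definition Dmulti :: "('m::{finite,linorder} \<Rightarrow> nat) \<Rightarrow> (('m, 'a) jpoint \<Rightarrow> 'f::real_normed_field)
                   \<Rightarrow> ('m, 'a) jpoint \<Rightarrow> 'f" where
  "Dmulti j = foldr (\<lambda>mu g. (Dtot mu ^^ j mu) \<circ> g) (sorted_list_of_set UNIV) id"

definition mabs :: "('m::finite \<Rightarrow> nat) \<Rightarrow> nat" where
  "mabs j = (\<Sum>mu\<in>UNIV. j mu)"

definition mbinom :: "('m::finite \<Rightarrow> nat) \<Rightarrow> ('m \<Rightarrow> nat) \<Rightarrow> nat" where
  "mbinom k i = (\<Prod>mu\<in>UNIV. k mu choose i mu)"

definition eps :: "('m::{finite,linorder} \<Rightarrow> nat) \<Rightarrow> ('a \<Rightarrow> ('m, 'a) jpoint \<Rightarrow> 'f::real_normed_field)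
                   \<Rightarrow> 'a \<Rightarrow> ('m \<Rightarrow> nat) \<Rightarrow> ('m, 'a) jpoint \<Rightarrow> 'f" where
  "eps k phi a i = (if k \<le> i
      then (\<lambda>p. of_nat (mbinom i k) * Dmulti (\<lambda>mu. i mu - k mu) (phi a) p)
      else (\<lambda>p. 0))"

end

theory Submission
  imports Defs "HOL-Analysis.Analysis"
begin

lemma mvb:
  fixes f :: "real \<Rightarrow> 'b::real_normed_vector"
  assumes d: "\<And>x. (f has_vector_derivative f' x) (at x)"
  and B: "\<And>x. x \<in> closed_segment a b \<Longrightarrow> norm (f' x) \<le> B"
  shows "norm (f b - f a) \<le> B * \<bar>b - a\<bar>"
proof -
  have "norm (f b - f a) \<le> B * norm (b - a)"
  proof (rule differentiable_bound[of "closed_segment a b" f "\<lambda>x h. h *\<^sub>R f' x"])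
    show "convex (closed_segment a b)" by simp
    show "(f has_derivative (\<lambda>h. h *\<^sub>R f' x)) (at x within closed_segment a b)" for x
      using d[of x] by (simp add: has_vector_derivative_def has_derivative_at_withinI)
    show "onorm (\<lambda>h. h *\<^sub>R f' x) \<le> B" if "x \<in> closed_segment a b" for x
      using B[OF that] by (simp add: onorm_scaleR_left onorm_id)
  qed auto
  then show ?thesis by simp
qed


lemma rect:
  fixes g :: "real \<Rightarrow> real \<Rightarrow> 'b::real_normed_vector"
  assumes d1: "\<And>s t. ((\<lambda>s. g s t) has_vector_derivative g1 s t) (at s)"
  and d12: "\<And>s t. ((\<lambda>t. g1 s t) has_vector_derivative g12 s t) (at t)"
  and bnd: "\<And>s t. \<bar>s\<bar> \<le> h \<Longrightarrow> \<bar>t\<bar> \<le> h \<Longrightarrow> norm (g12 s t - g12 0 0) \<le> e"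
  and h: "h > 0"
  shows "norm (g h h - g h 0 - g 0 h + g 0 0 - (h*h) *\<^sub>R g12 0 0) \<le> e * h * h"
proof -
  define c where "c = g12 0 0"
  have inner: "norm (g1 s h - g1 s 0 - h *\<^sub>R c) \<le> e * h" if s: "\<bar>s\<bar> \<le> h" for s
  proof -
    have "norm ((g1 s h - h *\<^sub>R c) - (g1 s 0 - 0 *\<^sub>R c)) \<le> e * \<bar>h - 0\<bar>"
    proof (rule mvb[where f' = "\<lambda>t. g12 s t - c"])
      show "((\<lambda>t. g1 s t - t *\<^sub>R c) has_vector_derivative g12 s t - c) (at t)" for t
        by (rule derivative_eq_intros d12 | simp)+
      show "norm (g12 s t - c) \<le> e" if "t \<in> closed_segment 0 h" for t
        using that h s bnd[of s t] by (auto simp: c_def closed_segment_eq_real_ivl)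
    qed
    then show ?thesis using h by (simp add: algebra_simps)
  qed
  have "norm ((g h h - g h 0 - (h*h) *\<^sub>R c) - (g 0 h - g 0 0 - (0*h) *\<^sub>R c)) \<le> (e*h) * \<bar>h - 0\<bar>"
  proof (rule mvb[where f' = "\<lambda>s. g1 s h - g1 s 0 - h *\<^sub>R c"])
    show "((\<lambda>s. g s h - g s 0 - (s*h) *\<^sub>R c) has_vector_derivative g1 s h - g1 s 0 - h *\<^sub>R c) (at s)" for s
      by (rule derivative_eq_intros d1 | simp)+
    show "norm (g1 s h - g1 s 0 - h *\<^sub>R c) \<le> e * h" if "s \<in> closed_segment 0 h" for s
      using that h inner[of s] by (auto simp: closed_segment_eq_real_ivl)
  qed
  then show ?thesis using h by (simp add: c_def algebra_simps)
qed

lemma clairaut2: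
  fixes g :: "real \<Rightarrow> real \<Rightarrow> 'b::real_normed_vector"
  assumes d1: "\<And>s t. ((\<lambda>s. g s t) has_vector_derivative g1 s t) (at s)"
  and d12: "\<And>s t. ((\<lambda>t. g1 s t) has_vector_derivative g12 s t) (at t)"
  and d2: "\<And>s t. ((\<lambda>t. g s t) has_vector_derivative g2 s t) (at t)"
  and d21: "\<And>s t. ((\<lambda>s. g2 s t) has_vector_derivative g21 s t) (at s)"
  and c12: "\<And>e. e>0 \<Longrightarrow> \<exists>d>0. \<forall>s t. \<bar>s\<bar> < d \<longrightarrow> \<bar>t\<bar> < d \<longrightarrow> norm (g12 s t - g12 0 0) < e"
  and c21: "\<And>e. e>0 \<Longrightarrow> \<exists>d>0. \<forall>s t. \<bar>s\<bar> < d \<longrightarrow> \<bar>t\<bar> < d \<longrightarrow> norm (g21 s t - g21 0 0) < e"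
  shows "g12 0 0 = g21 0 0"
proof -
  have "norm (g12 0 0 - g21 0 0) \<le> 2 * e" if e: "e > 0" for e
  proof -
    obtain d1' where d1': "d1' > 0" "\<forall>s t. \<bar>s\<bar> < d1' \<longrightarrow> \<bar>t\<bar> < d1' \<longrightarrow> norm (g12 s t - g12 0 0) < e"
      using c12[OF e] by blast
    obtain d2' where d2': "d2' > 0" "\<forall>s t. \<bar>s\<bar> < d2' \<longrightarrow> \<bar>t\<bar> < d2' \<longrightarrow> norm (g21 s t - g21 0 0) < e"
      using c21[OF e] by blast
    define h where "h = min d1' d2' / 2"
    have h: "h > 0" "h < d1'" "h < d2'" using d1' d2' by (auto simp: h_def)
    have A: "norm (g h h - g h 0 - g 0 h + g 0 0 - (h*h) *\<^sub>R g12 0 0) \<le> e * h * h"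
      proof (rule rect[OF d1 d12 _ h(1)])
      fix s t :: real assume "\<bar>s\<bar> \<le> h" "\<bar>t\<bar> \<le> h"
      then have "\<bar>s\<bar> < d1'" "\<bar>t\<bar> < d1'" using h by auto
      then show "norm (g12 s t - g12 0 0) \<le> e" using d1'(2) by (simp add: less_imp_le)
    qed
    have B: "norm (g h h - g 0 h - g h 0 + g 0 0 - (h*h) *\<^sub>R g21 0 0) \<le> e * h * h"
    proof -
      have "norm ((\<lambda>t s. g s t) h h - (\<lambda>t s. g s t) h 0 - (\<lambda>t s. g s t) 0 h + (\<lambda>t s. g s t) 0 0 - (h*h) *\<^sub>R (\<lambda>t s. g21 s t) 0 0) \<le> e * h * h"
      proof (rule rect[of "\<lambda>t s. g s t" "\<lambda>t s. g2 s t" "\<lambda>t s. g21 s t" h e, OF d2 d21 _ h(1)])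
        fix s t :: real assume "\<bar>s\<bar> \<le> h" "\<bar>t\<bar> \<le> h"
        then have "\<bar>s\<bar> < d2'" "\<bar>t\<bar> < d2'" using h by auto
        then show "norm (g21 t s - g21 0 0) \<le> e" using d2'(2) by (simp add: less_imp_le)
      qed
      then show ?thesis by simp
    qed
    have "norm ((h*h) *\<^sub>R (g12 0 0 - g21 0 0)) \<le> norm (g h h - g h 0 - g 0 h + g 0 0 - (h*h) *\<^sub>R g21 0 0)
        + norm (g h h - g h 0 - g 0 h + g 0 0 - (h*h) *\<^sub>R g12 0 0)"
      by (rule order_trans[OF _ norm_triangle_ineq4]) (simp add: algebra_simps)
    also have "\<dots> \<le> e*h*h + e*h*h" using A B by (simp add: algebra_simps)
    finally have F: "norm ((h*h) *\<^sub>R (g12 0 0 - g21 0 0)) \<le> (h*h) * (2*e)" by (simp add: algebra_simps)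
    have "\<bar>h*h\<bar> * norm (g12 0 0 - g21 0 0) \<le> (h*h) * (2*e)" using F by (simp only: norm_scaleR)
    then have "h*h * norm (g12 0 0 - g21 0 0) \<le> (h*h) * (2*e)" using h by simp
    then show ?thesis using h by (simp add: mult_le_cancel_left_pos)
  qed
  then have "norm (g12 0 0 - g21 0 0) \<le> 0"
    by (metis field_le_epsilon linordered_field_class.half_gt_zero mult.commute mult_2 nonzero_mult_div_cancel_left zero_neq_numeral add_0 times_divide_eq_right)
  then show ?thesis by simp
qed


definition Q :: "(('m,'a) jpoint \<Rightarrow> 'f::real_normed_field) \<Rightarrow> bool" where
  "Q h \<longleftrightarrow> continuous_on UNIV h \<and> (\<forall>v p. (\<lambda>t::real. h (p(v := p v + t))) differentiable (at 0))"

definition sm :: "(('m,'a) jpoint \<Rightarrow> 'f::real_normed_field) set" where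
  "sm = {f. \<forall>vs. Q (iter_pd vs f)}"

definition fdep_on :: "('m,'a) jvar set \<Rightarrow> (('m,'a) jpoint \<Rightarrow> 'f) \<Rightarrow> bool" where
  "fdep_on S f \<longleftrightarrow> (\<forall>p q. (\<forall>v\<in>S. p v = q v) \<longrightarrow> f p = f q)"

definition coord :: "('m,'a) jvar \<Rightarrow> ('m,'a) jpoint \<Rightarrow> 'f::real_normed_field" where
  "coord w = (\<lambda>p. of_real (p w))"

lemma smoothA_iff: "f \<in> smoothA \<longleftrightarrow> (\<exists>S. finite S \<and> fdep_on S f) \<and> f \<in> sm"
  by (auto simp: smoothA_def sm_def Q_def fdep_on_def)

lemma Q_hasd: "Q h \<Longrightarrow> ((\<lambda>t. h (p(v := p v + t))) has_vector_derivative pd v h p) (at 0)"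
  unfolding Q_def pd_def by (simp add: vector_derivative_works[symmetric])

lemma pd_eqI: "((\<lambda>t. h (p(v := p v + t))) has_vector_derivative D) (at 0) \<Longrightarrow> pd v h p = D"
  unfolding pd_def by (rule vector_derivative_at)

lemma Q_add: "Q f \<Longrightarrow> Q g \<Longrightarrow> Q (\<lambda>p. f p + g p)"
  unfolding Q_def by (auto intro: continuous_on_add differentiable_add)

lemma Q_mult: "Q f \<Longrightarrow> Q g \<Longrightarrow> Q (\<lambda>p. f p * g p)"
  unfolding Q_def by (auto intro: continuous_on_mult differentiable_mult)

lemma Q_const: "Q (\<lambda>p. c)"
  unfolding Q_def by auto

lemma line_coord: "(p(v := p v + t)) w = (if w = v then p w + t else p w)"
  by auto

lemma coord_hasd: "((\<lambda>t. coord w (p(v := p v + t))) has_vector_derivative (if w = v then 1 else 0)) (at 0)"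
  unfolding coord_def line_coord
  by (cases "w = v") (auto intro!: derivative_eq_intros)

lemma Q_coord: "Q (coord w :: _ \<Rightarrow> 'f::real_normed_field)"
  unfolding Q_def
proof safe
  show "continuous_on UNIV (coord w :: _ \<Rightarrow> 'f)" unfolding coord_def
    by (intro continuous_intros continuous_on_product_coordinates)
  fix v p show "(\<lambda>t. (coord w :: _ \<Rightarrow> 'f) (p(v := p v + t))) differentiable at 0"
    using coord_hasd[of w p v] differentiableI_vector by blast
qed

lemma Q_sum: "finite K \<Longrightarrow> (\<And>k. k \<in> K \<Longrightarrow> Q (g k)) \<Longrightarrow> Q (\<lambda>p. \<Sum>k\<in>K. g k p)"
  unfolding Q_def by (auto intro!: continuous_on_sum differentiable_sum)

lemma pd_add: "Q f \<Longrightarrow> Q g \<Longrightarrow> pd v (\<lambda>p. f p + g p) = (\<lambda>p. pd v f p + pd v g p)"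
  by (rule ext, rule pd_eqI, intro has_vector_derivative_add Q_hasd)

lemma pd_mult: assumes "Q f" "Q g" shows "pd v (\<lambda>p. f p * g p) = (\<lambda>p. f p * pd v g p + pd v f p * g p)"
  apply (rule ext, rule pd_eqI)
  using has_vector_derivative_mult[OF Q_hasd[OF assms(1)] Q_hasd[OF assms(2)]] by simp

lemma pd_const: "pd v (\<lambda>p. c) = (\<lambda>p. 0)"
  by (rule ext, rule pd_eqI) (rule has_vector_derivative_const)

lemma pd_coord: "pd v (coord w) = (\<lambda>p. if w = v then 1 else 0)"
  by (rule ext, rule pd_eqI, rule coord_hasd)

lemma pd_sum: "finite K \<Longrightarrow> (\<And>k. k \<in> K \<Longrightarrow> Q (g k)) \<Longrightarrow> pd v (\<lambda>p. \<Sum>k\<in>K. g k p) = (\<lambda>p. \<Sum>k\<in>K. pd v (g k) p)"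
  by (rule ext, rule pd_eqI, rule has_vector_derivative_sum, rule Q_hasd) auto

lemma iter_pd_snoc: "iter_pd (vs @ [v]) f = iter_pd vs (pd v f)"
  by (induction vs) auto

lemma sm_Q: "f \<in> sm \<Longrightarrow> Q (iter_pd vs f)"
  unfolding sm_def by auto

lemma sm_Q0: "f \<in> sm \<Longrightarrow> Q f"
  using sm_Q[of f "[]"] by simp

lemma sm_pd: "f \<in> sm \<Longrightarrow> pd v f \<in> sm"
  unfolding sm_def by (auto simp: iter_pd_snoc[symmetric])

lemma iter_add:
  "(\<And>ws. length ws < length vs \<Longrightarrow> Q (iter_pd ws f) \<and> Q (iter_pd ws g))
   \<Longrightarrow> iter_pd vs (\<lambda>p. f p + g p) = (\<lambda>p. iter_pd vs f p + iter_pd vs g p)"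
proof (induction vs)
  case Nil then show ?case by simp
next
  case (Cons v vs)
  have "iter_pd vs (\<lambda>p. f p + g p) = (\<lambda>p. iter_pd vs f p + iter_pd vs g p)"
    using Cons by auto
  moreover have "Q (iter_pd vs f)" "Q (iter_pd vs g)" using Cons.prems[of vs] by auto
  ultimately show ?case by (simp add: pd_add)
qed

lemma sm_add: "f \<in> sm \<Longrightarrow> g \<in> sm \<Longrightarrow> (\<lambda>p. f p + g p) \<in> sm"
  unfolding sm_def by (auto simp: iter_add Q_add)

lemma sm_mult_aux:
  "\<forall>(f::('m,'a) jpoint \<Rightarrow> 'f::real_normed_field) g vs. f \<in> sm \<longrightarrow> g \<in> sm \<longrightarrow> length vs \<le> n \<longrightarrow> Q (iter_pd vs (\<lambda>p. f p * g p))"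
proof (induction n)
  case 0 then show ?case by (auto intro: Q_mult sm_Q0)
next
  case (Suc n)
  show ?case
  proof (intro allI impI)
    fix f g :: "('m,'a) jpoint \<Rightarrow> 'f::real_normed_field" and vs :: "('m,'a) jvar list"
    assume f: "f \<in> sm" and g: "g \<in> sm" and l: "length vs \<le> Suc n"
    show "Q (iter_pd vs (\<lambda>p. f p * g p))"
    proof (cases vs rule: rev_cases)
      case Nil then show ?thesis using f g by (auto intro: Q_mult sm_Q0)
    next
      case (snoc ws v)
      have lw: "length ws \<le> n" using l snoc by simp
      have e: "iter_pd vs (\<lambda>p. f p * g p) = iter_pd ws (\<lambda>p. f p * pd v g p + pd v f p * g p)"
        using snoc f g by (simp add: iter_pd_snoc pd_mult sm_Q0)
      have h1: "Q (iter_pd us (\<lambda>p. f p * pd v g p))" if "length us \<le> n" for us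
        using Suc.IH f sm_pd[OF g] that by blast
      have h2: "Q (iter_pd us (\<lambda>p. pd v f p * g p))" if "length us \<le> n" for us
        using Suc.IH g sm_pd[OF f] that by blast
      have "iter_pd ws (\<lambda>p. f p * pd v g p + pd v f p * g p)
         = (\<lambda>p. iter_pd ws (\<lambda>p. f p * pd v g p) p + iter_pd ws (\<lambda>p. pd v f p * g p) p)"
        by (rule iter_add) (use h1 h2 lw in auto)
      then show ?thesis using e h1[OF lw] h2[OF lw] by (simp add: Q_add)
    qed
  qed
qed

lemma sm_mult: "f \<in> sm \<Longrightarrow> g \<in> sm \<Longrightarrow> (\<lambda>p. f p * g p) \<in> sm"
  unfolding sm_def using sm_mult_aux[unfolded sm_def] by blast

lemma iter_pd_const: "iter_pd vs (\<lambda>p. c) = (\<lambda>p. if vs = [] then c else 0)"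
  by (induction vs) (auto simp: pd_const)

lemma sm_const: "(\<lambda>p. c) \<in> sm"
  unfolding sm_def by (auto simp: iter_pd_const Q_const)

lemma iter_pd_coord: "iter_pd vs (coord w) = (if vs = [] then coord w else (\<lambda>p. iter_pd (butlast vs) (\<lambda>p. if w = last vs then 1 else 0) p))"
  by (cases vs rule: rev_cases) (auto simp: iter_pd_snoc pd_coord)

lemma sm_coord: "coord w \<in> sm"
  unfolding sm_def by (auto simp: iter_pd_coord iter_pd_const Q_const Q_coord)

lemma sm_sum: "finite K \<Longrightarrow> (\<And>k. k \<in> K \<Longrightarrow> g k \<in> sm) \<Longrightarrow> (\<lambda>p. \<Sum>k\<in>K. g k p) \<in> sm"
proof (induction K rule: finite_induct)
  case empty then show ?case using sm_const[of 0] by simp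
next
  case (insert x F) then show ?case by (simp add: sm_add)
qed



lemma fdep_mono: "fdep_on S f \<Longrightarrow> S \<subseteq> T \<Longrightarrow> fdep_on T f"
  unfolding fdep_on_def by blast
lemma fdep_add: "fdep_on S f \<Longrightarrow> fdep_on S g \<Longrightarrow> fdep_on S (\<lambda>p. f p + g p)"
  unfolding fdep_on_def by (intro allI impI, rule arg_cong2[where f="(+)"]) blast+
lemma fdep_mult: "fdep_on S f \<Longrightarrow> fdep_on S g \<Longrightarrow> fdep_on S (\<lambda>p. f p * g p)"
  unfolding fdep_on_def by (intro allI impI, rule arg_cong2[where f="(*)"]) blast+
lemma fdep_const: "fdep_on S (\<lambda>p. c)"
  unfolding fdep_on_def by blast
lemma fdep_coord: "w \<in> S \<Longrightarrow> fdep_on S (coord w)"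
  unfolding fdep_on_def coord_def by auto
lemma fdep_sum: "(\<And>k. k \<in> K \<Longrightarrow> fdep_on S (g k)) \<Longrightarrow> fdep_on S (\<lambda>p. \<Sum>k\<in>K. g k p)"
  unfolding fdep_on_def by (intro allI impI sum.cong refl) blast
lemma fdep_pd: assumes "fdep_on S f" shows "fdep_on S (pd v f)"
  unfolding fdep_on_def
proof (intro allI impI)
  fix p q :: "('a,'b) jpoint" assume a: "\<forall>w\<in>S. p w = q w"
  have "(\<lambda>t. f (p(v := p v + t))) = (\<lambda>t. f (q(v := q v + t)))"
  proof
    fix t
    have "\<forall>w\<in>S. (p(v := p v + t)) w = (q(v := q v + t)) w" using a by auto
    then show "f (p(v := p v + t)) = f (q(v := q v + t))" using assms unfolding fdep_on_def by blast
  qed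
  then show "pd v f p = pd v f q" unfolding pd_def by simp
qed
lemma pd_outside: assumes "fdep_on S f" "v \<notin> S" shows "pd v f = (\<lambda>p. 0)"
proof
  fix p
  have "(\<lambda>t. f (p(v := p v + t))) = (\<lambda>t. f p)"
  proof
    fix t
    have "\<forall>w\<in>S. (p(v := p v + t)) w = p w" using assms(2) by auto
    then show "f (p(v := p v + t)) = f p" using assms(1) unfolding fdep_on_def by blast
  qed
  then show "pd v f p = 0" unfolding pd_def by (simp add: vector_derivative_const_at)
qed

lemma vd_shift: "((\<lambda>h. G (s + h)) has_vector_derivative D) (at 0) \<Longrightarrow> (G has_vector_derivative D) (at (s::real))"
proof -
  assume a: "((\<lambda>h. G (s + h)) has_vector_derivative D) (at 0)"
  have "((\<lambda>x. x - s) has_vector_derivative 1) (at s)"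
    unfolding has_real_derivative_iff_has_vector_derivative[symmetric] by (auto intro!: derivative_eq_intros)
  from vector_diff_chain_at[OF this, of "\<lambda>h. G (s+h)" D] a show ?thesis by (simp add: o_def)
qed

lemma cont2:
  fixes H :: "('m,'a) jpoint \<Rightarrow> 'f::real_normed_vector"
  assumes H: "continuous_on UNIV H"
  shows "\<And>e. e > 0 \<Longrightarrow> \<exists>d>0. \<forall>s t. \<bar>s\<bar> < d \<longrightarrow> \<bar>t\<bar> < d \<longrightarrow>
     norm (H (p(v := p v + s, w := p w + t)) - H (p(v := p v + 0, w := p w + 0))) < e"
proof -
  fix e :: real assume e: "e > 0"
  define P where "P = (\<lambda>z::real\<times>real. p(v := p v + fst z, w := p w + snd z))"
  have cP: "continuous_on UNIV P" unfolding P_def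
  proof (intro continuous_on_coordinatewise_then_product)
    fix i show "continuous_on UNIV (\<lambda>x. (p(v := p v + fst x, w := p w + snd x)) i)"
      by (cases "i = w"; cases "i = v") (auto intro!: continuous_intros)
  qed
  have "continuous_on UNIV (H \<circ> P)" using continuous_on_compose[OF cP] H
    by (metis continuous_on_subset subset_UNIV)
  then have "isCont (H \<circ> P) (0,0)" using continuous_on_eq_continuous_at[OF open_UNIV, of "H \<circ> P"] by blast
  then obtain d where d: "d > 0" "\<forall>x'. dist x' (0,0) < d \<longrightarrow> dist ((H \<circ> P) x') ((H \<circ> P) (0,0)) < e"
    using e unfolding continuous_at_eps_delta by blast
  show "\<exists>d>0. \<forall>s t. \<bar>s\<bar> < d \<longrightarrow> \<bar>t\<bar> < d \<longrightarrow>
     norm (H (p(v := p v + s, w := p w + t)) - H (p(v := p v + 0, w := p w + 0))) < e"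
  proof (intro exI[of _ "d/2"] conjI allI impI)
    fix s t :: real assume st: "\<bar>s\<bar> < d/2" "\<bar>t\<bar> < d/2"
    have "dist (s,t) (0,0) \<le> \<bar>s\<bar> + \<bar>t\<bar>"
      using sqrt_sum_squares_le_sum_abs[of s t] by (simp add: dist_Pair_Pair dist_real_def)
    then have "dist (s,t) (0,0) < d" using st by simp
    then show "norm (H (p(v := p v + s, w := p w + t)) - H (p(v := p v + 0, w := p w + 0))) < e"
      using d(2) by (auto simp: P_def dist_norm)
  qed (use d in auto)
qed

lemma line2_v: fixes p :: "('m,'a) jpoint" shows "v \<noteq> w \<Longrightarrow> (p(v := p v + s, w := p w + t))(v := (p(v := p v + s, w := p w + t)) v + h)
   = p(v := p v + (s + h), w := p w + t)"
  by (rule ext) (auto simp: algebra_simps)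
lemma line2_w: fixes p :: "('m,'a) jpoint" shows "v \<noteq> w \<Longrightarrow> (p(v := p v + s, w := p w + t))(w := (p(v := p v + s, w := p w + t)) w + h)
   = p(v := p v + s, w := p w + (t + h))"
  by (rule ext) (auto simp: algebra_simps)

lemma dv: fixes p :: "('m,'a) jpoint" assumes "Q F" "v \<noteq> w"
  shows "((\<lambda>s. F (p(v := p v + s, w := p w + t))) has_vector_derivative pd v F (p(v := p v + s, w := p w + t))) (at s)"
  by (rule vd_shift) (use Q_hasd[OF assms(1), of "p(v := p v + s, w := p w + t)" v] in \<open>simp only: line2_v[OF assms(2)]\<close>)
lemma dw: fixes p :: "('m,'a) jpoint" assumes "Q F" "v \<noteq> w"
  shows "((\<lambda>t. F (p(v := p v + s, w := p w + t))) has_vector_derivative pd w F (p(v := p v + s, w := p w + t))) (at t)"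
  by (rule vd_shift) (use Q_hasd[OF assms(1), of "p(v := p v + s, w := p w + t)" w] in \<open>simp only: line2_w[OF assms(2)]\<close>)



lemma pd_comm: assumes f: "f \<in> sm" shows "pd v (pd w f) = pd w (pd v f)"
proof (cases "v = w")
  case True then show ?thesis by simp
next
  case vw: False
  show ?thesis
  proof
    fix p
    let ?P = "\<lambda>s t::real. p(v := p v + s, w := p w + t)"
    have "pd w (pd v f) (?P 0 0) = pd v (pd w f) (?P 0 0)"
    proof (rule clairaut2[of "\<lambda>s t. f (?P s t)" "\<lambda>s t. pd v f (?P s t)" "\<lambda>s t. pd w (pd v f) (?P s t)"
          "\<lambda>s t. pd w f (?P s t)" "\<lambda>s t. pd v (pd w f) (?P s t)"])
      show "((\<lambda>s. f (?P s t)) has_vector_derivative pd v f (?P s t)) (at s)" for s t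
        by (rule dv[OF sm_Q0[OF f] vw])
      show "((\<lambda>t. pd v f (?P s t)) has_vector_derivative pd w (pd v f) (?P s t)) (at t)" for s t
        by (rule dw[OF sm_Q0[OF sm_pd[OF f]] vw])
      show "((\<lambda>t. f (?P s t)) has_vector_derivative pd w f (?P s t)) (at t)" for s t
        by (rule dw[OF sm_Q0[OF f] vw])
      show "((\<lambda>s. pd w f (?P s t)) has_vector_derivative pd v (pd w f) (?P s t)) (at s)" for s t
        by (rule dv[OF sm_Q0[OF sm_pd[OF f]] vw])
      show "\<And>e. e>0 \<Longrightarrow> \<exists>d>0. \<forall>s t. \<bar>s\<bar> < d \<longrightarrow> \<bar>t\<bar> < d \<longrightarrow> norm (pd w (pd v f) (?P s t) - pd w (pd v f) (?P 0 0)) < e"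
        by (rule cont2) (use sm_Q0[OF sm_pd[OF sm_pd[OF f]]] in \<open>simp add: Q_def\<close>)
      show "\<And>e. e>0 \<Longrightarrow> \<exists>d>0. \<forall>s t. \<bar>s\<bar> < d \<longrightarrow> \<bar>t\<bar> < d \<longrightarrow> norm (pd v (pd w f) (?P s t) - pd v (pd w f) (?P 0 0)) < e"
        by (rule cont2) (use sm_Q0[OF sm_pd[OF sm_pd[OF f]]] in \<open>simp add: Q_def\<close>)
    qed
    then show "pd v (pd w f) p = pd w (pd v f) p" by simp
  qed
qed



definition sh :: "'m \<Rightarrow> ('m \<Rightarrow> nat) \<Rightarrow> ('m \<Rightarrow> nat)" where
  "sh mu i = (\<lambda>nu. i nu + unitidx mu nu)"
definition uv :: "'a \<times> ('m \<Rightarrow> nat) \<Rightarrow> ('m,'a) jvar" where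
  "uv x = U (fst x) (snd x)"
definition shp :: "'m \<Rightarrow> 'a \<times> ('m \<Rightarrow> nat) \<Rightarrow> 'a \<times> ('m \<Rightarrow> nat)" where
  "shp mu x = (fst x, sh mu (snd x))"
definition Dt :: "('a \<times> ('m \<Rightarrow> nat)) set \<Rightarrow> 'm \<Rightarrow> (('m,'a) jpoint \<Rightarrow> 'f::real_normed_field) \<Rightarrow> ('m,'a) jpoint \<Rightarrow> 'f" where
  "Dt P mu f = (\<lambda>p. pd (X mu) f p + (\<Sum>x\<in>P. coord (uv (shp mu x)) p * pd (uv x) f p))"

lemma uv_inj[simp]: "uv x = uv y \<longleftrightarrow> x = y"
  by (auto simp: uv_def prod_eq_iff)
lemma uv_X[simp]: "uv x \<noteq> X mu" "X mu \<noteq> uv x"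
  by (auto simp: uv_def)

lemma finite_PS: "finite S \<Longrightarrow> finite (uv -` S)"
  by (rule finite_vimageI) (auto simp: inj_def)

lemma sh_comm: "sh mu (sh nu i) = sh nu (sh mu i)"
  by (auto simp: sh_def fun_eq_iff)

lemma Dtot_Dt:
  fixes f :: "('m,'a) jpoint \<Rightarrow> 'f::real_normed_field"
  assumes fd: "fdep_on S f" and P: "finite P" "uv -` S \<subseteq> P"
  shows "Dtot mu f = Dt P mu f"
proof
  fix p
  let ?N = "{(a, i). pd (U a i) f \<noteq> (\<lambda>_. 0)}"
  have N: "?N \<subseteq> P"
  proof
    fix x assume "x \<in> ?N"
    then have "pd (uv x) f \<noteq> (\<lambda>_. 0)" by (auto simp: uv_def split: prod.splits)
    then have "uv x \<in> S" using pd_outside[OF fd] by blast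
    then show "x \<in> P" using P by auto
  qed
  have "(\<Sum>(a, i)\<in>?N. of_real (p (U a (\<lambda>nu. i nu + unitidx mu nu))) * pd (U a i) f p)
      = (\<Sum>x\<in>?N. coord (uv (shp mu x)) p * pd (uv x) f p)"
    by (rule sum.cong) (auto simp: coord_def uv_def shp_def sh_def)
  also have "\<dots> = (\<Sum>x\<in>P. coord (uv (shp mu x)) p * pd (uv x) f p)"
    by (rule sum.mono_neutral_left[OF P(1) N]) (auto simp: uv_def)
  finally show "Dtot mu f p = Dt P mu f p" unfolding Dtot_def Dt_def by simp
qed

lemma Dt_sm: "f \<in> sm \<Longrightarrow> finite P \<Longrightarrow> Dt P mu f \<in> sm"
  unfolding Dt_def by (intro sm_add sm_pd sm_sum sm_mult sm_coord)

lemma Dt_fdep: "fdep_on S f \<Longrightarrow> uv ` shp mu ` P \<subseteq> S \<Longrightarrow> fdep_on S (Dt P mu f)"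
  unfolding Dt_def by (intro fdep_add fdep_pd fdep_sum fdep_mult fdep_coord) auto

lemma pd_cmult: assumes "Q f" shows "pd v (\<lambda>p. c * f p) = (\<lambda>p. c * pd v f p)"
  using pd_mult[OF Q_const[of c] assms, of v] by (simp add: pd_const)

lemma Dt_add: "f \<in> sm \<Longrightarrow> g \<in> sm \<Longrightarrow> finite P \<Longrightarrow> Dt P mu (\<lambda>p. f p + g p) = (\<lambda>p. Dt P mu f p + Dt P mu g p)"
  unfolding Dt_def by (simp add: pd_add sm_Q0 distrib_left sum.distrib add_ac)

lemma Dt_cmult: "f \<in> sm \<Longrightarrow> finite P \<Longrightarrow> Dt P mu (\<lambda>p. c * f p) = (\<lambda>p. c * Dt P mu f p)"
  unfolding Dt_def by (simp add: pd_cmult sm_Q0 distrib_left sum_distrib_left mult.left_commute)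

lemma smoothA_E: assumes "f \<in> smoothA" obtains S where "finite S" "fdep_on S f" "f \<in> sm"
  using assms smoothA_iff by blast

lemma Dtot_smoothA: assumes "f \<in> smoothA" shows "Dtot mu f \<in> smoothA"
proof -
  obtain S where S: "finite S" "fdep_on S f" "f \<in> sm" using assms by (rule smoothA_E)
  let ?P = "uv -` S"
  have e: "Dtot mu f = Dt ?P mu f" by (rule Dtot_Dt[OF S(2) finite_PS[OF S(1)]]) auto
  have "fdep_on (S \<union> uv ` shp mu ` ?P) (Dt ?P mu f)"
    by (rule Dt_fdep) (auto intro: fdep_mono[OF S(2)])
  moreover have "finite (S \<union> uv ` shp mu ` ?P)" using S(1) finite_PS[OF S(1)] by simp
  moreover have "Dt ?P mu f \<in> sm" by (rule Dt_sm[OF S(3) finite_PS[OF S(1)]])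
  ultimately show ?thesis unfolding e smoothA_iff by blast
qed

lemma Dtot_add: assumes "f \<in> smoothA" "g \<in> smoothA"
  shows "Dtot mu (\<lambda>p. f p + g p) = (\<lambda>p. Dtot mu f p + Dtot mu g p)"
proof -
  obtain S where S: "finite S" "fdep_on S f" "f \<in> sm" using assms(1) by (rule smoothA_E)
  obtain T where T: "finite T" "fdep_on T g" "g \<in> sm" using assms(2) by (rule smoothA_E)
  let ?P = "uv -` (S \<union> T)"
  have fP: "finite ?P" using S T by (intro finite_PS) auto
  have "Dtot mu f = Dt ?P mu f" by (rule Dtot_Dt[OF fdep_mono[OF S(2), of "S \<union> T"] fP]) auto
  moreover have "Dtot mu g = Dt ?P mu g" by (rule Dtot_Dt[OF fdep_mono[OF T(2), of "S \<union> T"] fP]) auto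
  moreover have "Dtot mu (\<lambda>p. f p + g p) = Dt ?P mu (\<lambda>p. f p + g p)"
    by (rule Dtot_Dt[OF fdep_add[OF fdep_mono[OF S(2), of "S \<union> T"] fdep_mono[OF T(2), of "S \<union> T"]] fP]) auto
  ultimately show ?thesis using Dt_add[OF S(3) T(3) fP] by simp
qed

lemma Dtot_cmult: assumes "f \<in> smoothA"
  shows "Dtot mu (\<lambda>p. c * f p) = (\<lambda>p. c * Dtot mu f p)"
proof -
  obtain S where S: "finite S" "fdep_on S f" "f \<in> sm" using assms(1) by (rule smoothA_E)
  let ?P = "uv -` S"
  have fP: "finite ?P" using S by (intro finite_PS) auto
  have "Dtot mu f = Dt ?P mu f" by (rule Dtot_Dt[OF S(2) fP]) auto
  moreover have "Dtot mu (\<lambda>p. c * f p) = Dt ?P mu (\<lambda>p. c * f p)"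
    by (rule Dtot_Dt[OF fdep_mult[OF fdep_const S(2)] fP]) auto
  ultimately show ?thesis using Dt_cmult[OF S(3) fP] by simp
qed

lemma smoothA_add: "f \<in> smoothA \<Longrightarrow> g \<in> smoothA \<Longrightarrow> (\<lambda>p. f p + g p) \<in> smoothA"
proof -
  assume f: "f \<in> smoothA" and g: "g \<in> smoothA"
  obtain S where S: "finite S" "fdep_on S f" "f \<in> sm" using f by (rule smoothA_E)
  obtain T where T: "finite T" "fdep_on T g" "g \<in> sm" using g by (rule smoothA_E)
  have "fdep_on (S \<union> T) (\<lambda>p. f p + g p)"
    by (rule fdep_add[OF fdep_mono[OF S(2)] fdep_mono[OF T(2)]]) auto
  moreover have "(\<lambda>p. f p + g p) \<in> sm" by (rule sm_add[OF S(3) T(3)])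
  moreover have "finite (S \<union> T)" using S T by simp
  ultimately show ?thesis unfolding smoothA_iff by blast
qed

lemma smoothA_cmult: "f \<in> smoothA \<Longrightarrow> (\<lambda>p. c * f p) \<in> smoothA"
proof -
  assume f: "f \<in> smoothA"
  obtain S where S: "finite S" "fdep_on S f" "f \<in> sm" using f by (rule smoothA_E)
  have "fdep_on S (\<lambda>p. c * f p)" by (rule fdep_mult[OF fdep_const S(2)])
  moreover have "(\<lambda>p. c * f p) \<in> sm" by (rule sm_mult[OF sm_const S(3)])
  ultimately show ?thesis unfolding smoothA_iff using S(1) by blast
qed

lemma smoothA_const: "(\<lambda>p. c) \<in> smoothA"
proof -
  have "fdep_on {} (\<lambda>p. c)" by (rule fdep_const)
  moreover have "(\<lambda>p. c) \<in> sm" by (rule sm_const)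
  ultimately show ?thesis unfolding smoothA_iff by blast
qed

lemma smoothA_sum: "finite K \<Longrightarrow> (\<And>k. k \<in> K \<Longrightarrow> g k \<in> smoothA) \<Longrightarrow> (\<lambda>p. \<Sum>k\<in>K. g k p) \<in> smoothA"
proof (induction K rule: finite_induct)
  case empty then show ?case using smoothA_const[of 0] by simp
next
  case (insert x F) then show ?case by (simp add: smoothA_add)
qed



lemma pd_Dt:
  assumes f: "f \<in> sm" and P: "finite P"
  shows "pd w (Dt P nu f) = (\<lambda>p. pd w (pd (X nu) f) p + (\<Sum>x\<in>P. coord (uv (shp nu x)) p * pd w (pd (uv x) f) p
     + (if uv (shp nu x) = w then 1 else 0) * pd (uv x) f p))"
proof -
  have Qs: "Q (\<lambda>p. \<Sum>x\<in>P. coord (uv (shp nu x)) p * pd (uv x) f p)"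
    by (intro Q_sum P Q_mult Q_coord sm_Q0 sm_pd f)
  show ?thesis unfolding Dt_def
    by (simp add: pd_add[OF sm_Q0[OF sm_pd[OF f]] Qs] pd_sum[OF P] Q_mult Q_coord sm_Q0 sm_pd f pd_mult pd_coord)
qed

definition EXPR :: "('a \<times> ('m \<Rightarrow> nat)) set \<Rightarrow> 'm \<Rightarrow> 'm \<Rightarrow> (('m,'a) jpoint \<Rightarrow> 'f::real_normed_field) \<Rightarrow> ('m,'a) jpoint \<Rightarrow> 'f" where
  "EXPR P0 mu nu f p = pd (X mu) (pd (X nu) f) p
     + (\<Sum>x\<in>P0. coord (uv (shp nu x)) p * pd (X mu) (pd (uv x) f) p)
     + (\<Sum>y\<in>P0. coord (uv (shp mu y)) p * pd (uv y) (pd (X nu) f) p)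
     + (\<Sum>x\<in>P0. coord (uv (shp mu (shp nu x))) p * pd (uv x) f p)
     + (\<Sum>y\<in>P0. \<Sum>x\<in>P0. coord (uv (shp mu y)) p * (coord (uv (shp nu x)) p * pd (uv y) (pd (uv x) f) p))"

lemma shp_comm: "shp mu (shp nu x) = shp nu (shp mu x)"
  by (simp add: shp_def sh_comm)

lemma EXPR_sym: assumes f: "f \<in> sm" shows "EXPR P0 mu nu f p = EXPR P0 nu mu f p"
proof -
  have c1: "pd (X mu) (pd (X nu) f) = pd (X nu) (pd (X mu) f)" by (rule pd_comm[OF f])
  have c2: "pd (uv y) (pd (X nu) f) = pd (X nu) (pd (uv y) f)" for y nu by (rule pd_comm[OF f])
  have c3: "pd (uv y) (pd (uv x) f) = pd (uv x) (pd (uv y) f)" for x y by (rule pd_comm[OF f])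
  have s5: "(\<Sum>y\<in>P0. \<Sum>x\<in>P0. coord (uv (shp mu y)) p * (coord (uv (shp nu x)) p * pd (uv y) (pd (uv x) f) p))
     = (\<Sum>y\<in>P0. \<Sum>x\<in>P0. coord (uv (shp nu y)) p * (coord (uv (shp mu x)) p * pd (uv y) (pd (uv x) f) p))"
  proof (subst sum.swap, intro sum.cong refl)
    fix x y
    show "coord (uv (shp mu x)) p * (coord (uv (shp nu y)) p * pd (uv x) (pd (uv y) f) p) =
          coord (uv (shp nu y)) p * (coord (uv (shp mu x)) p * pd (uv y) (pd (uv x) f) p)"
      by (simp only: c3[of x y]) (simp add: mult_ac)
  qed
  show ?thesis unfolding EXPR_def s5 c1 c2 shp_comm[of mu nu] by (simp add: add_ac)
qed

lemma DtDt:
  fixes f :: "('m,'a) jpoint \<Rightarrow> 'f::real_normed_field"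
  assumes f: "f \<in> sm" "fdep_on S f" and S: "finite S"
  and P1: "finite P1" "uv -` S \<subseteq> P1" "shp nu ` (uv -` S) \<subseteq> P1"
  shows "Dt P1 mu (Dt (uv -` S) nu f) p = EXPR (uv -` S) mu nu f p"
proof -
  define P0 where "P0 = uv -` S"
  have P0: "finite P0" using finite_PS[OF S] by (simp add: P0_def)
  have P01: "P0 \<subseteq> P1" "shp nu ` P0 \<subseteq> P1" using P1 by (auto simp: P0_def)
  have van: "pd (uv y) g p = 0" if "y \<in> P1 - P0" "fdep_on S g" for y g
  proof -
    have "uv y \<notin> S" using that by (auto simp: P0_def)
    then show ?thesis using pd_outside[OF that(2)] by simp
  qed
  let ?cm = "\<lambda>y. coord (uv (shp mu y)) p" and ?cn = "\<lambda>x. coord (uv (shp nu x)) p"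
  have A: "pd (X mu) (Dt P0 nu f) p = pd (X mu) (pd (X nu) f) p + (\<Sum>x\<in>P0. ?cn x * pd (X mu) (pd (uv x) f) p)"
    by (simp add: pd_Dt[OF f(1) P0])
  have B: "pd (uv y) (Dt P0 nu f) p = pd (uv y) (pd (X nu) f) p
      + (\<Sum>x\<in>P0. ?cn x * pd (uv y) (pd (uv x) f) p + (if shp nu x = y then 1 else 0) * pd (uv x) f p)" for y
    by (simp add: pd_Dt[OF f(1) P0])
  have T1: "(\<Sum>y\<in>P1. ?cm y * pd (uv y) (pd (X nu) f) p) = (\<Sum>y\<in>P0. ?cm y * pd (uv y) (pd (X nu) f) p)"
    by (rule sum.mono_neutral_right[OF P1(1) P01(1)]) (simp add: van fdep_pd[OF f(2)])
  have T3: "(\<Sum>y\<in>P1. \<Sum>x\<in>P0. ?cm y * (?cn x * pd (uv y) (pd (uv x) f) p))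
       = (\<Sum>y\<in>P0. \<Sum>x\<in>P0. ?cm y * (?cn x * pd (uv y) (pd (uv x) f) p))"
    by (rule sum.mono_neutral_right[OF P1(1) P01(1)]) (simp add: van fdep_pd[OF f(2)])
  have T2: "(\<Sum>y\<in>P1. \<Sum>x\<in>P0. ?cm y * ((if shp nu x = y then 1 else 0) * pd (uv x) f p))
       = (\<Sum>x\<in>P0. coord (uv (shp mu (shp nu x))) p * pd (uv x) f p)"
  proof -
    have "(\<Sum>y\<in>P1. \<Sum>x\<in>P0. ?cm y * ((if shp nu x = y then 1 else 0) * pd (uv x) f p))
        = (\<Sum>x\<in>P0. \<Sum>y\<in>P1. (if shp nu x = y then ?cm y * pd (uv x) f p else 0))"
      by (subst sum.swap) (intro sum.cong refl, simp)
    also have "\<dots> = (\<Sum>x\<in>P0. coord (uv (shp mu (shp nu x))) p * pd (uv x) f p)"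
    proof (intro sum.cong refl)
      fix x assume "x \<in> P0"
      then have "shp nu x \<in> P1" using P01(2) by auto
      then show "(\<Sum>y\<in>P1. (if shp nu x = y then ?cm y * pd (uv x) f p else 0)) = coord (uv (shp mu (shp nu x))) p * pd (uv x) f p"
        by (simp add: sum.delta'[OF P1(1)])
    qed
    finally show ?thesis .
  qed
  have "Dt P1 mu (Dt P0 nu f) p = pd (X mu) (Dt P0 nu f) p + (\<Sum>y\<in>P1. ?cm y * pd (uv y) (Dt P0 nu f) p)"
    by (simp add: Dt_def)
  also have "(\<Sum>y\<in>P1. ?cm y * pd (uv y) (Dt P0 nu f) p)
     = (\<Sum>y\<in>P1. ?cm y * pd (uv y) (pd (X nu) f) p)
       + (\<Sum>y\<in>P1. \<Sum>x\<in>P0. ?cm y * (?cn x * pd (uv y) (pd (uv x) f) p))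
       + (\<Sum>y\<in>P1. \<Sum>x\<in>P0. ?cm y * ((if shp nu x = y then 1 else 0) * pd (uv x) f p))"
    unfolding B by (simp add: distrib_left sum.distrib sum_distrib_left)
  finally show ?thesis unfolding T1 T2 T3 A P0_def[symmetric] EXPR_def by (simp add: add_ac)
qed

lemma Dtot_comm:
  fixes f :: "('m,'a) jpoint \<Rightarrow> 'f::real_normed_field"
  assumes "f \<in> smoothA" shows "Dtot mu (Dtot nu f) = Dtot nu (Dtot mu f)"
proof
  fix p
  obtain S where S: "finite S" "fdep_on S f" "f \<in> sm" using assms by (rule smoothA_E)
  define P0 where "P0 = uv -` S"
  have P0: "finite P0" using finite_PS[OF S(1)] by (simp add: P0_def)
  define S1 where "S1 = S \<union> uv ` shp mu ` P0 \<union> uv ` shp nu ` P0"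
  have S1: "finite S1" using S(1) P0 by (simp add: S1_def)
  define P1 where "P1 = uv -` S1"
  have fP1: "finite P1" using finite_PS[OF S1] by (simp add: P1_def)
  have sub: "uv -` S \<subseteq> P1" "shp nu ` (uv -` S) \<subseteq> P1" "shp mu ` (uv -` S) \<subseteq> P1"
    by (auto simp: P1_def S1_def P0_def)
  have e1: "Dtot nu f = Dt P0 nu f" "Dtot mu f = Dt P0 mu f"
    using Dtot_Dt[OF S(2) P0] by (auto simp: P0_def)
  have fd: "fdep_on S1 (Dt P0 nu f)" "fdep_on S1 (Dt P0 mu f)"
    by (rule Dt_fdep, rule fdep_mono[OF S(2)], auto simp: S1_def)+
  have e2: "Dtot mu (Dt P0 nu f) = Dt P1 mu (Dt P0 nu f)" "Dtot nu (Dt P0 mu f) = Dt P1 nu (Dt P0 mu f)"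
    using Dtot_Dt[OF fd(1) fP1] Dtot_Dt[OF fd(2) fP1] by (auto simp: P1_def)
  have "Dtot mu (Dtot nu f) p = Dt P1 mu (Dt P0 nu f) p" using e1 e2 by simp
  also have "\<dots> = EXPR P0 mu nu f p"
    unfolding P0_def by (rule DtDt[OF S(3) S(2) S(1) fP1 sub(1,2)])
  also have "\<dots> = EXPR P0 nu mu f p" by (rule EXPR_sym[OF S(3)])
  also have "\<dots> = Dt P1 nu (Dt P0 mu f) p"
    unfolding P0_def by (rule DtDt[OF S(3) S(2) S(1) fP1 sub(1,3), symmetric])
  also have "\<dots> = Dtot nu (Dtot mu f) p" using e1 e2 by simp
  finally show "Dtot mu (Dtot nu f) p = Dtot nu (Dtot mu f) p" .
qed



definition opL :: "'m list \<Rightarrow> ('m \<Rightarrow> nat) \<Rightarrow> (('m,'a) jpoint \<Rightarrow> 'f::real_normed_field) \<Rightarrow> ('m,'a) jpoint \<Rightarrow> 'f" where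
  "opL L j = foldr (\<lambda>mu g. (Dtot mu ^^ j mu) \<circ> g) L id"

lemma opL_Nil[simp]: "opL [] j f = f" by (simp add: opL_def)
lemma opL_Cons[simp]: "opL (mu # L) j f = (Dtot mu ^^ j mu) (opL L j f)" by (simp add: opL_def)

lemma pow_sm: "f \<in> smoothA \<Longrightarrow> (Dtot mu ^^ n) f \<in> smoothA"
  by (induction n) (auto intro: Dtot_smoothA)

lemma pow_comm: "f \<in> smoothA \<Longrightarrow> Dtot nu ((Dtot mu ^^ n) f) = (Dtot mu ^^ n) (Dtot nu f)"
  by (induction n) (auto simp: Dtot_comm pow_sm)

lemma pow_pow_comm: "f \<in> smoothA \<Longrightarrow> (Dtot nu ^^ m) ((Dtot mu ^^ n) f) = (Dtot mu ^^ n) ((Dtot nu ^^ m) f)"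
  by (induction m) (auto simp: pow_comm pow_sm)

lemma op_sm: "f \<in> smoothA \<Longrightarrow> opL L j f \<in> smoothA"
  by (induction L) (auto intro: pow_sm)

lemma pow_op_comm: "f \<in> smoothA \<Longrightarrow> (Dtot mu ^^ n) (opL L j f) = opL L j ((Dtot mu ^^ n) f)"
proof (induction L)
  case Nil then show ?case by simp
next
  case (Cons a L)
  have "(Dtot mu ^^ n) (opL (a # L) j f) = (Dtot a ^^ j a) ((Dtot mu ^^ n) (opL L j f))"
    using pow_pow_comm[OF op_sm[OF Cons.prems, of L j], where nu=mu and m=n and mu=a and n="j a"] by simp
  then show ?case using Cons by simp
qed

lemma op_add: "f \<in> smoothA \<Longrightarrow> opL L i (opL L j f) = opL L (\<lambda>mu. i mu + j mu) f"
proof (induction L)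
  case Nil then show ?case by simp
next
  case (Cons mu L)
  have "opL (mu # L) i (opL (mu # L) j f) = (Dtot mu ^^ i mu) (opL L i ((Dtot mu ^^ j mu) (opL L j f)))"
    by simp
  also have "\<dots> = (Dtot mu ^^ i mu) ((Dtot mu ^^ j mu) (opL L i (opL L j f)))"
    using pow_op_comm[OF op_sm[OF Cons.prems, of L j], where mu=mu and n="j mu" and L=L and j=i] by simp
  also have "\<dots> = opL (mu # L) (\<lambda>mu. i mu + j mu) f"
    using Cons by (simp add: funpow_add)
  finally show ?case .
qed

lemma op_zero: "opL L (\<lambda>_. 0) f = f"
  by (induction L) auto

lemma pow_add: "f \<in> smoothA \<Longrightarrow> g \<in> smoothA \<Longrightarrow> (Dtot mu ^^ n) (\<lambda>p. f p + g p) = (\<lambda>p. (Dtot mu ^^ n) f p + (Dtot mu ^^ n) g p)"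
  by (induction n) (auto simp: Dtot_add pow_sm)

lemma pow_cmult: "f \<in> smoothA \<Longrightarrow> (Dtot mu ^^ n) (\<lambda>p. c * f p) = (\<lambda>p. c * (Dtot mu ^^ n) f p)"
  by (induction n) (auto simp: Dtot_cmult pow_sm)

lemma op_addf: "f \<in> smoothA \<Longrightarrow> g \<in> smoothA \<Longrightarrow> opL L j (\<lambda>p. f p + g p) = (\<lambda>p. opL L j f p + opL L j g p)"
  by (induction L) (auto simp: pow_add op_sm)

lemma op_cmult: "f \<in> smoothA \<Longrightarrow> opL L j (\<lambda>p. c * f p) = (\<lambda>p. c * opL L j f p)"
  by (induction L) (auto simp: pow_cmult op_sm)

lemma Dmulti_opL: "Dmulti j = opL (sorted_list_of_set UNIV) j"
  by (simp add: Dmulti_def opL_def fun_eq_iff)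

lemma Dm_sm: "f \<in> smoothA \<Longrightarrow> Dmulti j f \<in> smoothA"
  by (simp add: Dmulti_opL op_sm)

lemma Dm_Dm: "f \<in> smoothA \<Longrightarrow> Dmulti i (Dmulti j f) = Dmulti (\<lambda>mu. i mu + j mu) f"
  by (simp add: Dmulti_opL op_add)

lemma Dm_zero: "Dmulti (\<lambda>_. 0) f = f"
  by (simp add: Dmulti_opL op_zero)

lemma Dm_lin:
  fixes g :: "'k \<Rightarrow> ('m::{finite,linorder},'a) jpoint \<Rightarrow> 'f::real_normed_field"
  shows "finite K \<Longrightarrow> (\<And>k. k \<in> K \<Longrightarrow> g k \<in> smoothA)
   \<Longrightarrow> Dmulti j (\<lambda>p. \<Sum>k\<in>K. c k * g k p) = (\<lambda>p. \<Sum>k\<in>K. c k * Dmulti j (g k) p)"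
proof (induction K rule: finite_induct)
  case empty
  have "Dmulti j (\<lambda>p. 0 * (0::'f)) = (\<lambda>p. 0 * Dmulti j (\<lambda>p. 0) p)"
    unfolding Dmulti_opL by (rule op_cmult[OF smoothA_const])
  then show ?case by simp
next
  case (insert x F)
  have s: "(\<lambda>p. \<Sum>k\<in>F. c k * g k p) \<in> smoothA"
    using insert by (intro smoothA_sum smoothA_cmult) auto
  have "Dmulti j (\<lambda>p. \<Sum>k\<in>insert x F. c k * g k p) = Dmulti j (\<lambda>p. c x * g x p + (\<Sum>k\<in>F. c k * g k p))"
    using insert by simp
  also have "\<dots> = (\<lambda>p. Dmulti j (\<lambda>p. c x * g x p) p + Dmulti j (\<lambda>p. \<Sum>k\<in>F. c k * g k p) p)"
    unfolding Dmulti_opL by (rule op_addf[OF smoothA_cmult s]) (use insert in auto)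
  also have "\<dots> = (\<lambda>p. c x * Dmulti j (g x) p + (\<Sum>k\<in>F. c k * Dmulti j (g k) p))"
    using insert by (simp add: Dmulti_opL op_cmult)
  finally show ?case using insert by simp
qed



lemma alt1: "(\<Sum>s\<le>n. of_nat (n choose s) * (-1) ^ s) = (if n = 0 then 1 else (0::'r::comm_ring_1))"
  using binomial_ring[of "-1 :: 'r" 1 n] by (auto simp: mult_ac zero_power)

lemma alt2: "(\<Sum>s\<le>n. of_nat (n choose s) * (-1) ^ (n - s)) = (if n = 0 then 1 else (0::'r::comm_ring_1))"
  using binomial_ring[of "1 :: 'r" "-1" n] by (auto simp: mult_ac zero_power)

lemma reidx: "(l::nat) \<le> i \<Longrightarrow> (\<Sum>t\<in>{l..i}. F t) = (\<Sum>s\<le>i - l. F (s + l))"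
proof -
  assume "l \<le> i"
  then have "{l..i} = {0 + l..(i - l) + l}" by simp
  then show ?thesis by (simp only: sum.shift_bounds_cl_nat_ivl atLeast0AtMost)
qed

lemma id1:
  assumes "l \<le> (i::nat)"
  shows "(\<Sum>t\<in>{l..i}. of_nat (i choose t) * ((-1) ^ (t - l) * of_nat (t choose l))) = (if l = i then 1 else (0::'r::comm_ring_1))"
proof -
  have "(\<Sum>t\<in>{l..i}. of_nat (i choose t) * ((-1) ^ (t - l) * of_nat (t choose l)))
      = (\<Sum>t\<in>{l..i}. of_nat (i choose l) * (of_nat ((i - l) choose (t - l)) * (-1) ^ (t - l)) :: 'r)"
  proof (intro sum.cong refl)
    fix t assume t: "t \<in> {l..i}"
    have "(i choose t) * (t choose l) = (i choose l) * ((i - l) choose (t - l))"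
      using choose_mult[of l t i] t by auto
    then have "(of_nat (i choose t) * of_nat (t choose l) :: 'r) = of_nat (i choose l) * of_nat ((i - l) choose (t - l))"
      by (metis of_nat_mult)
    then show "of_nat (i choose t) * ((-1) ^ (t - l) * of_nat (t choose l)) = (of_nat (i choose l) * (of_nat ((i - l) choose (t - l)) * (-1) ^ (t - l)) :: 'r)"
      by (metis (no_types, lifting) mult.assoc mult.commute)
  qed
  also have "\<dots> = of_nat (i choose l) * (\<Sum>s\<le>i - l. of_nat ((i - l) choose s) * (-1) ^ s)"
    by (simp add: reidx[OF assms] sum_distrib_left)
  also have "\<dots> = (if l = i then 1 else 0)" using assms by (simp add: alt1)
  finally show ?thesis .
qed

lemma id2:
  assumes "l \<le> (k::nat)"
  shows "(\<Sum>t\<in>{l..k}. (-1) ^ (k - t) * of_nat (k choose t) * of_nat (t choose l)) = (if l = k then 1 else (0::'r::comm_ring_1))"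
proof -
  have "(\<Sum>t\<in>{l..k}. (-1) ^ (k - t) * of_nat (k choose t) * of_nat (t choose l))
      = (\<Sum>t\<in>{l..k}. of_nat (k choose l) * (of_nat ((k - l) choose (t - l)) * (-1) ^ ((k - l) - (t - l))) :: 'r)"
  proof (intro sum.cong refl)
    fix t assume t: "t \<in> {l..k}"
    have "(k choose t) * (t choose l) = (k choose l) * ((k - l) choose (t - l))"
      using choose_mult[of l t k] t by auto
    then have "(of_nat (k choose t) * of_nat (t choose l) :: 'r) = of_nat (k choose l) * of_nat ((k - l) choose (t - l))"
      by (metis of_nat_mult)
    moreover have "k - t = (k - l) - (t - l)" using t by auto
    ultimately show "(-1) ^ (k - t) * of_nat (k choose t) * of_nat (t choose l) = (of_nat (k choose l) * (of_nat ((k - l) choose (t - l)) * (-1) ^ ((k - l) - (t - l))) :: 'r)"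
      by (metis (no_types, lifting) mult.assoc mult.commute)
  qed
  also have "\<dots> = of_nat (k choose l) * (\<Sum>s\<le>k - l. of_nat ((k - l) choose s) * (-1) ^ ((k - l) - s))"
    by (simp add: reidx[OF assms] sum_distrib_left add.commute)
  also have "\<dots> = (if l = k then 1 else 0)" by (simp only: alt2) (use assms in auto)
  finally show ?thesis .
qed

lemma box_PiE: "{k. l \<le> k \<and> k \<le> (i::'m \<Rightarrow> nat)} = PiE UNIV (\<lambda>mu. {l mu..i mu})"
  by (auto simp: PiE_def Pi_def le_fun_def extensional_def)

lemma atMost_PiE: "{..(i::'m \<Rightarrow> nat)} = PiE UNIV (\<lambda>mu. {..i mu})"
  by (auto simp: PiE_def Pi_def le_fun_def extensional_def)

lemma finite_atMost_fun: "finite {..(i::'m::finite \<Rightarrow> nat)}"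
  unfolding atMost_PiE by (rule finite_PiE) auto

lemma prod_ind: "(\<Prod>mu\<in>(UNIV::'m::finite set). if l mu = i mu then 1 else (0::'r::comm_ring_1)) = (if l = i then 1 else 0)"
proof (cases "l = i")
  case True then show ?thesis by simp
next
  case False
  then obtain mu where "l mu \<noteq> i mu" by (auto simp: fun_eq_iff)
  then show ?thesis using False by (intro trans[OF prod_zero]) auto
qed

lemma mid1:
  fixes l i :: "'m::finite \<Rightarrow> nat"
  assumes "l \<le> i"
  shows "(\<Sum>k\<in>{k. l \<le> k \<and> k \<le> i}. of_nat (mbinom i k) * ((-1) ^ mabs (\<lambda>mu. k mu - l mu) * of_nat (mbinom k l)))
     = (if l = i then 1 else (0::'r::comm_ring_1))"
proof -
  have "(\<Sum>k\<in>{k. l \<le> k \<and> k \<le> i}. of_nat (mbinom i k) * ((-1) ^ mabs (\<lambda>mu. k mu - l mu) * of_nat (mbinom k l)))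
      = (\<Sum>k\<in>PiE UNIV (\<lambda>mu. {l mu..i mu}). \<Prod>mu\<in>UNIV. of_nat (i mu choose k mu) * ((-1) ^ (k mu - l mu) * of_nat (k mu choose l mu)) :: 'r)"
    unfolding box_PiE mbinom_def mabs_def
    by (simp add: power_sum prod.distrib)
  also have "\<dots> = (\<Prod>mu\<in>UNIV. \<Sum>t\<in>{l mu..i mu}. of_nat (i mu choose t) * ((-1) ^ (t - l mu) * of_nat (t choose l mu)))"
    by (rule prod_sum_PiE[symmetric]) auto
  also have "\<dots> = (\<Prod>mu\<in>UNIV. if l mu = i mu then 1 else 0)"
    using assms by (intro prod.cong refl id1) (auto simp: le_fun_def)
  finally show ?thesis by (simp add: prod_ind)
qed

lemma mid2:
  fixes l k :: "'m::finite \<Rightarrow> nat"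
  assumes "l \<le> k"
  shows "(\<Sum>i\<in>{i. l \<le> i \<and> i \<le> k}. (-1) ^ mabs (\<lambda>mu. k mu - i mu) * of_nat (mbinom k i) * of_nat (mbinom i l))
     = (if l = k then 1 else (0::'r::comm_ring_1))"
proof -
  have "(\<Sum>i\<in>{i. l \<le> i \<and> i \<le> k}. (-1) ^ mabs (\<lambda>mu. k mu - i mu) * of_nat (mbinom k i) * of_nat (mbinom i l))
      = (\<Sum>i\<in>PiE UNIV (\<lambda>mu. {l mu..k mu}). \<Prod>mu\<in>UNIV. (-1) ^ (k mu - i mu) * of_nat (k mu choose i mu) * of_nat (i mu choose l mu) :: 'r)"
    unfolding box_PiE mbinom_def mabs_def
    by (simp add: power_sum prod.distrib)
  also have "\<dots> = (\<Prod>mu\<in>UNIV. \<Sum>t\<in>{l mu..k mu}. (-1) ^ (k mu - t) * of_nat (k mu choose t) * of_nat (t choose l mu))"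
    by (rule prod_sum_PiE[symmetric]) auto
  also have "\<dots> = (\<Prod>mu\<in>UNIV. if l mu = k mu then 1 else 0)"
    using assms by (intro prod.cong refl id2) (auto simp: le_fun_def)
  finally show ?thesis by (simp add: prod_ind)
qed



lemma T_form:
  fixes phi :: "('m::{finite,linorder} \<Rightarrow> nat) \<Rightarrow> 'a \<Rightarrow> ('m, 'a) jpoint \<Rightarrow> 'f::real_normed_field"
  shows "(\<lambda>p. \<Sum>k\<in>{..i}. eps k (phi k) a i p) = (\<lambda>p. \<Sum>k\<in>{..i}. of_nat (mbinom i k) * Dmulti (\<lambda>mu. i mu - k mu) (phi k a) p)"
  by (intro ext sum.cong refl) (auto simp: eps_def)

lemma Dm_comb: "f \<in> smoothA \<Longrightarrow> l \<le> i \<Longrightarrow> i \<le> k \<Longrightarrow>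
   Dmulti (\<lambda>mu. k mu - i mu) (Dmulti (\<lambda>mu. i mu - l mu) f) = Dmulti (\<lambda>mu. k mu - l mu) f"
  by (simp add: Dm_Dm le_fun_def)

lemma Dm_le_sm: "f \<in> smoothA \<Longrightarrow> (\<lambda>p. \<Sum>k\<in>K. c k * Dmulti (j k) (g k) p) \<in> smoothA" if "finite K" "\<And>k. k \<in> K \<Longrightarrow> g k \<in> smoothA"
  using that by (intro smoothA_sum smoothA_cmult Dm_sm) auto

lemma U_part:
  fixes phi :: "('m::{finite,linorder} \<Rightarrow> nat) \<Rightarrow> 'a \<Rightarrow> ('m, 'a) jpoint \<Rightarrow> 'f::real_normed_field"
  assumes sm: "\<And>k a. phi k a \<in> smoothA"
  and z: "\<And>a i. zeta a i = (\<lambda>p. \<Sum>k\<in>{..i}. of_nat (mbinom i k) * Dmulti (\<lambda>mu. i mu - k mu) (phi k a) p)"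
  shows "phi k a = (\<lambda>p. \<Sum>i\<in>{..k}. (-1) ^ mabs (\<lambda>mu. k mu - i mu) * of_nat (mbinom k i)
                   * Dmulti (\<lambda>mu. k mu - i mu) (zeta a i) p)"
proof
  fix p
  let ?c = "\<lambda>i. (-1) ^ mabs (\<lambda>mu. k mu - i mu) * of_nat (mbinom k i) :: 'f"
  let ?G = "\<lambda>l. Dmulti (\<lambda>mu. k mu - l mu) (phi l a) p"
  have "(\<Sum>i\<in>{..k}. ?c i * Dmulti (\<lambda>mu. k mu - i mu) (zeta a i) p)
      = (\<Sum>i\<in>{..k}. \<Sum>l\<in>{..i}. ?c i * (of_nat (mbinom i l) * ?G l))"
  proof (intro sum.cong refl)
    fix i assume i: "i \<in> {..k}"
    have "Dmulti (\<lambda>mu. k mu - i mu) (zeta a i) = (\<lambda>p. \<Sum>l\<in>{..i}. of_nat (mbinom i l) * Dmulti (\<lambda>mu. k mu - i mu) (Dmulti (\<lambda>mu. i mu - l mu) (phi l a)) p)"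
      unfolding z by (rule Dm_lin) (auto intro: Dm_sm sm simp: finite_atMost_fun)
    also have "\<dots> = (\<lambda>p. \<Sum>l\<in>{..i}. of_nat (mbinom i l) * Dmulti (\<lambda>mu. k mu - l mu) (phi l a) p)"
      using i by (intro ext sum.cong refl) (auto simp: Dm_comb sm)
    finally show "?c i * Dmulti (\<lambda>mu. k mu - i mu) (zeta a i) p = (\<Sum>l\<in>{..i}. ?c i * (of_nat (mbinom i l) * ?G l))"
      by (simp add: sum_distrib_left)
  qed
  also have "\<dots> = (\<Sum>i\<in>{..k}. \<Sum>l\<in>{l\<in>{..k}. l \<le> i}. ?c i * (of_nat (mbinom i l) * ?G l))"
    by (intro sum.cong refl) (auto intro: order_trans)
  also have "\<dots> = (\<Sum>l\<in>{..k}. \<Sum>i\<in>{i\<in>{..k}. l \<le> i}. ?c i * (of_nat (mbinom i l) * ?G l))"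
    by (rule sum.swap_restrict) (auto simp: finite_atMost_fun)
  also have "\<dots> = (\<Sum>l\<in>{..k}. (\<Sum>i\<in>{i. l \<le> i \<and> i \<le> k}. ?c i * of_nat (mbinom i l)) * ?G l)"
    by (intro sum.cong) (auto simp: sum_distrib_right mult.assoc intro!: sum.cong)
  also have "\<dots> = (\<Sum>l\<in>{..k}. (if l = k then 1 else 0) * ?G l)"
    by (intro sum.cong refl) (simp add: mid2)
  also have "\<dots> = (\<Sum>l\<in>{..k}. if l = k then ?G l else 0)" by (intro sum.cong refl) simp
  also have "\<dots> = ?G k" using finite_atMost_fun[of k] by (simp add: sum.delta)
  also have "\<dots> = phi k a p" by (simp add: Dm_zero)
  finally show "phi k a p = (\<Sum>i\<in>{..k}. ?c i * Dmulti (\<lambda>mu. k mu - i mu) (zeta a i) p)" by simp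
qed

lemma E_part:
  fixes zeta :: "'a \<Rightarrow> ('m::{finite,linorder} \<Rightarrow> nat) \<Rightarrow> ('m, 'a) jpoint \<Rightarrow> 'f::real_normed_field"
  assumes sm: "\<And>a i. zeta a i \<in> smoothA"
  defines "phi \<equiv> \<lambda>k a. (\<lambda>p. \<Sum>i\<in>{..k}. (-1) ^ mabs (\<lambda>mu. k mu - i mu) * of_nat (mbinom k i)
                   * Dmulti (\<lambda>mu. k mu - i mu) (zeta a i) p)"
  shows "zeta a i = (\<lambda>p. \<Sum>k\<in>{..i}. of_nat (mbinom i k) * Dmulti (\<lambda>mu. i mu - k mu) (phi k a) p)"
proof
  fix p
  let ?c = "\<lambda>k l. (-1) ^ mabs (\<lambda>mu. k mu - l mu) * of_nat (mbinom k l) :: 'f"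
  let ?G = "\<lambda>l. Dmulti (\<lambda>mu. i mu - l mu) (zeta a l) p"
  have "(\<Sum>k\<in>{..i}. of_nat (mbinom i k) * Dmulti (\<lambda>mu. i mu - k mu) (phi k a) p)
      = (\<Sum>k\<in>{..i}. \<Sum>l\<in>{..k}. of_nat (mbinom i k) * (?c k l * ?G l))"
  proof (intro sum.cong refl)
    fix k assume k: "k \<in> {..i}"
    have "Dmulti (\<lambda>mu. i mu - k mu) (phi k a) = (\<lambda>p. \<Sum>l\<in>{..k}. ?c k l * Dmulti (\<lambda>mu. i mu - k mu) (Dmulti (\<lambda>mu. k mu - l mu) (zeta a l)) p)"
      unfolding phi_def by (rule Dm_lin) (auto intro: Dm_sm sm simp: finite_atMost_fun)
    also have "\<dots> = (\<lambda>p. \<Sum>l\<in>{..k}. ?c k l * Dmulti (\<lambda>mu. i mu - l mu) (zeta a l) p)"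
      using k by (intro ext sum.cong refl) (auto simp: Dm_comb sm)
    finally show "of_nat (mbinom i k) * Dmulti (\<lambda>mu. i mu - k mu) (phi k a) p = (\<Sum>l\<in>{..k}. of_nat (mbinom i k) * (?c k l * ?G l))"
      by (simp add: sum_distrib_left)
  qed
  also have "\<dots> = (\<Sum>k\<in>{..i}. \<Sum>l\<in>{l\<in>{..i}. l \<le> k}. of_nat (mbinom i k) * (?c k l * ?G l))"
    by (intro sum.cong refl) (auto intro: order_trans)
  also have "\<dots> = (\<Sum>l\<in>{..i}. \<Sum>k\<in>{k\<in>{..i}. l \<le> k}. of_nat (mbinom i k) * (?c k l * ?G l))"
    by (rule sum.swap_restrict) (auto simp: finite_atMost_fun)
  also have "\<dots> = (\<Sum>l\<in>{..i}. (\<Sum>k\<in>{k. l \<le> k \<and> k \<le> i}. of_nat (mbinom i k) * ?c k l) * ?G l)"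
    by (intro sum.cong) (auto simp: sum_distrib_right mult.assoc intro!: sum.cong)
  also have "\<dots> = (\<Sum>l\<in>{..i}. (if l = i then 1 else 0) * ?G l)"
    by (intro sum.cong refl) (simp add: mid1)
  also have "\<dots> = (\<Sum>l\<in>{..i}. if l = i then ?G l else 0)" by (intro sum.cong refl) simp
  also have "\<dots> = ?G i" using finite_atMost_fun[of i] by (simp add: sum.delta)
  also have "\<dots> = zeta a i p" by (simp add: Dm_zero)
  finally show "zeta a i p = (\<Sum>k\<in>{..i}. of_nat (mbinom i k) * Dmulti (\<lambda>mu. i mu - k mu) (phi k a) p)" by simp
qed

theorem mainTheorem16:
  fixes zeta :: "'a::finite \<Rightarrow> ('m::{finite,linorder} \<Rightarrow> nat) \<Rightarrow> ('m, 'a) jpoint \<Rightarrow> 'f::real_normed_field"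
  assumes "\<forall>a i. zeta a i \<in> smoothA"
  shows "(\<exists>!phi :: ('m \<Rightarrow> nat) \<Rightarrow> 'a \<Rightarrow> ('m, 'a) jpoint \<Rightarrow> 'f.
            (\<forall>k a. phi k a \<in> smoothA) \<and>
            (\<forall>a i. zeta a i = (\<lambda>p. \<Sum>k\<in>{..i}. eps k (phi k) a i p)))
       \<and> (\<forall>phi :: ('m \<Rightarrow> nat) \<Rightarrow> 'a \<Rightarrow> ('m, 'a) jpoint \<Rightarrow> 'f.
            ((\<forall>k a. phi k a \<in> smoothA) \<and>
             (\<forall>a i. zeta a i = (\<lambda>p. \<Sum>k\<in>{..i}. eps k (phi k) a i p)))
            \<longrightarrow> (\<forall>k a. phi k a = (\<lambda>p. \<Sum>i\<in>{..k}.
                   (-1) ^ mabs (\<lambda>mu. k mu - i mu) * of_nat (mbinom k i)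
                   * Dmulti (\<lambda>mu. k mu - i mu) (zeta a i) p)))"
proof -
  have zs: "\<And>a i. zeta a i \<in> smoothA" using assms by blast
  define S where "S = (\<lambda>(k::'m \<Rightarrow> nat) (a::'a). (\<lambda>p. \<Sum>i\<in>{..k}.
                   (-1) ^ mabs (\<lambda>mu. k mu - i mu) * of_nat (mbinom k i)
                   * Dmulti (\<lambda>mu. k mu - i mu) (zeta a i) p) :: ('m, 'a) jpoint \<Rightarrow> 'f)"
  have part2: "\<forall>phi :: ('m \<Rightarrow> nat) \<Rightarrow> 'a \<Rightarrow> ('m, 'a) jpoint \<Rightarrow> 'f.
            ((\<forall>k a. phi k a \<in> smoothA) \<and>
             (\<forall>a i. zeta a i = (\<lambda>p. \<Sum>k\<in>{..i}. eps k (phi k) a i p)))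
            \<longrightarrow> (\<forall>k a. phi k a = (\<lambda>p. \<Sum>i\<in>{..k}.
                   (-1) ^ mabs (\<lambda>mu. k mu - i mu) * of_nat (mbinom k i)
                   * Dmulti (\<lambda>mu. k mu - i mu) (zeta a i) p))"
  proof (intro allI impI)
    fix phi :: "('m \<Rightarrow> nat) \<Rightarrow> 'a \<Rightarrow> ('m, 'a) jpoint \<Rightarrow> 'f" and k a
    assume h: "(\<forall>k a. phi k a \<in> smoothA) \<and> (\<forall>a i. zeta a i = (\<lambda>p. \<Sum>k\<in>{..i}. eps k (phi k) a i p))"
    show "phi k a = (\<lambda>p. \<Sum>i\<in>{..k}. (-1) ^ mabs (\<lambda>mu. k mu - i mu) * of_nat (mbinom k i)
                   * Dmulti (\<lambda>mu. k mu - i mu) (zeta a i) p)"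
      by (rule U_part) (use h in \<open>auto simp: T_form\<close>)
  qed
  have Ssm: "\<forall>k a. S k a \<in> smoothA"
    unfolding S_def by (auto intro!: smoothA_sum smoothA_cmult Dm_sm zs simp: finite_atMost_fun)
  have Seq: "\<forall>a i. zeta a i = (\<lambda>p. \<Sum>k\<in>{..i}. eps k (S k) a i p)"
  proof (intro allI)
    fix a i
    have "(\<lambda>p. \<Sum>k\<in>{..i}. eps k (S k) a i p) = (\<lambda>p. \<Sum>k\<in>{..i}. of_nat (mbinom i k) * Dmulti (\<lambda>mu. i mu - k mu) (S k a) p)"
      by (rule T_form)
    then show "zeta a i = (\<lambda>p. \<Sum>k\<in>{..i}. eps k (S k) a i p)"
      using E_part[OF zs, where a=a and i=i] by (simp add: S_def)
  qed
  have ex: "\<exists>!phi :: ('m \<Rightarrow> nat) \<Rightarrow> 'a \<Rightarrow> ('m, 'a) jpoint \<Rightarrow> 'f.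
            (\<forall>k a. phi k a \<in> smoothA) \<and>
            (\<forall>a i. zeta a i = (\<lambda>p. \<Sum>k\<in>{..i}. eps k (phi k) a i p))"
  proof (rule ex1I[of _ S])
    show "(\<forall>k a. S k a \<in> smoothA) \<and> (\<forall>a i. zeta a i = (\<lambda>p. \<Sum>k\<in>{..i}. eps k (S k) a i p))"
      using Ssm Seq by blast
    fix phi :: "('m \<Rightarrow> nat) \<Rightarrow> 'a \<Rightarrow> ('m, 'a) jpoint \<Rightarrow> 'f"
    assume "(\<forall>k a. phi k a \<in> smoothA) \<and> (\<forall>a i. zeta a i = (\<lambda>p. \<Sum>k\<in>{..i}. eps k (phi k) a i p))"
    then have "\<forall>k a. phi k a = S k a" using part2 unfolding S_def by blast
    then show "phi = S" by (intro ext) simp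
  qed
  show ?thesis using ex part2 by blast
qed

end
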